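(* Let $L$ be an $r\times n$ $\boldsymbol\rho$-latin rectangle with $r<n$. Then $L$ can be completed to an $n\times n$ $\boldsymbol\rho$-latin square if and only if $\rho_\ell-e_\ell\le n-r$ for all $\ell\in[k]$ and one (equivalently, given the first condition, every one) of the following six conditions holds: (1) $|J|(n-r)\le\sum_{\ell\in[k]}\min\{\rho_\ell-e_\ell,\ \mu_J(\ell)\}$ for all $J\subseteq[n]$; (2) $\sum_{\ell\in K}(\rho_\ell-e_\ell)\le\sum_{j\in[n]}\min\{n-r,\ \mu_K(j)\}$ for all $K\subseteq[k]$; (3) $|J|(n-r)\ge\sum_{\ell\in[k]}\big((\rho_\ell-e_\ell)\dot-\mu_{\bar J}(\ell)\big)$ for all $J\subseteq[n]$; (4) $\sum_{\ell\in K}(\rho_\ell-e_\ell)\ge\sum_{j\in[n]}\big((n-r)\dot-\mu_{\bar K}(j)\big)$ for all $K\subseteq[k]$; (5) $|J|(n-r)\le\sum_{\ell\in K}(\rho_\ell-e_\ell)+\mu_J(\bar K)$ for all $J\subseteq[n]$ and $K\subseteq[k]$; (6) $\sum_{\ell\in K}(\rho_\ell-e_\ell)\le|J|(n-r)+\mu_K(\bar J)$ for all $J\subseteq[n]$ and $K\subseteq[k]$.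
   Context: Let $n,k$ be positive integers. Let $\boldsymbol\rho=(\rho_1,\dots,\rho_k)$ be integers with $1\le\rho_\ell\le n\le k$ and $\sum_{\ell\in[k]}\rho_\ell=n^2$. The symbols are the elements of $[k]$. A $\boldsymbol\rho$-latin square of order $n$ is an $n\times n$ array with entries in $[k]$, each symbol at most once per row and per column, and symbol $\ell$ occurring exactly $\rho_\ell$ times. An $r\times s$ $\boldsymbol\rho$-latin rectangle is an $r\times s$ array with entries in $[k]$, each symbol at most once per row and per column, and symbol $\ell$ occurring at most $\rho_\ell$ times. Completing it means finding a $\boldsymbol\rho$-latin square of order $n$ whose top-left subarray is $L$. Here $s=n$, so the columns are $[n]$. $e_\ell$ is the number of occurrences of $\ell$ in $L$. For $j\in[n]$, $\ell\in[k]$, $J\subseteq[n]$, $K\subseteq[k]$: - $\mu_K(j)$ is the number of symbols of $K$ not occurring in column $j$ of $L$; - $\mu_J(\ell)$ is the number of columns in $J$ not containing $\ell$; - $\mu_J(K)=\sum_{\ell\in K}\mu_J(\ell)$ and $\mu_K(J)=\sum_{j\in J}\mu_K(j)$. $\bar J=[n]\setminus J$, $\bar K=[k]\setminus K$, and $x\dot- y=\max\{0,x-y\}$. *)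

theory Defs
  imports Main
begin

text \<open>Arrays are functions nat => nat => nat; rows and columns are indexed by
  {1..r} and {1..s}; symbols are the elements of {1..k}. Values outside the
  index range are irrelevant.\<close>

definition occ :: "nat \<Rightarrow> nat \<Rightarrow> (nat \<Rightarrow> nat \<Rightarrow> nat) \<Rightarrow> nat \<Rightarrow> nat" where
  "occ r s L l = card {(i, j). i \<in> {1..r} \<and> j \<in> {1..s} \<and> L i j = l}"

definition rho_latin_rectangle ::
  "nat \<Rightarrow> nat \<Rightarrow> (nat \<Rightarrow> nat) \<Rightarrow> nat \<Rightarrow> nat \<Rightarrow> (nat \<Rightarrow> nat \<Rightarrow> nat) \<Rightarrow> bool" where
  "rho_latin_rectangle n k rho r s L \<longleftrightarrow>
     (\<forall>i\<in>{1..r}. \<forall>j\<in>{1..s}. L i j \<in> {1..k}) \<and>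
     (\<forall>i\<in>{1..r}. \<forall>j\<in>{1..s}. \<forall>j'\<in>{1..s}. j \<noteq> j' \<longrightarrow> L i j \<noteq> L i j') \<and>
     (\<forall>j\<in>{1..s}. \<forall>i\<in>{1..r}. \<forall>i'\<in>{1..r}. i \<noteq> i' \<longrightarrow> L i j \<noteq> L i' j) \<and>
     (\<forall>l\<in>{1..k}. occ r s L l \<le> rho l)"

definition rho_latin_square ::
  "nat \<Rightarrow> nat \<Rightarrow> (nat \<Rightarrow> nat) \<Rightarrow> (nat \<Rightarrow> nat \<Rightarrow> nat) \<Rightarrow> bool" where
  "rho_latin_square n k rho S \<longleftrightarrow>
     (\<forall>i\<in>{1..n}. \<forall>j\<in>{1..n}. S i j \<in> {1..k}) \<and>
     (\<forall>i\<in>{1..n}. \<forall>j\<in>{1..n}. \<forall>j'\<in>{1..n}. j \<noteq> j' \<longrightarrow> S i j \<noteq> S i j') \<and>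
     (\<forall>j\<in>{1..n}. \<forall>i\<in>{1..n}. \<forall>i'\<in>{1..n}. i \<noteq> i' \<longrightarrow> S i j \<noteq> S i' j) \<and>
     (\<forall>l\<in>{1..k}. occ n n S l = rho l)"

definition completable ::
  "nat \<Rightarrow> nat \<Rightarrow> (nat \<Rightarrow> nat) \<Rightarrow> nat \<Rightarrow> nat \<Rightarrow> (nat \<Rightarrow> nat \<Rightarrow> nat) \<Rightarrow> bool" where
  "completable n k rho r s L \<longleftrightarrow>
     (\<exists>S. rho_latin_square n k rho S \<and> (\<forall>i\<in>{1..r}. \<forall>j\<in>{1..s}. S i j = L i j))"

definition mu_col :: "nat \<Rightarrow> (nat \<Rightarrow> nat \<Rightarrow> nat) \<Rightarrow> nat set \<Rightarrow> nat \<Rightarrow> nat" where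
  "mu_col r L K j = card {l\<in>K. \<forall>i\<in>{1..r}. L i j \<noteq> l}"

definition mu_sym :: "nat \<Rightarrow> (nat \<Rightarrow> nat \<Rightarrow> nat) \<Rightarrow> nat set \<Rightarrow> nat \<Rightarrow> nat" where
  "mu_sym r L J l = card {j\<in>J. \<forall>i\<in>{1..r}. L i j \<noteq> l}"

end

theory Submission
  imports Defs
begin


definition RR :: "'a set \<Rightarrow> 'b set \<Rightarrow> ('a \<Rightarrow> 'b \<Rightarrow> nat) \<Rightarrow> ('b \<Rightarrow> nat) \<Rightarrow> 'a set \<Rightarrow> nat" where
  "RR X Y c b J = (\<Sum>y\<in>Y. min (b y) (\<Sum>x\<in>J. c x y))"

lemma min_concave_nat:
  fixes p q1 q2 s bb :: nat
  assumes "p \<le> q1" "p \<le> q2" "q1 \<le> s" "q2 \<le> s" "p + s = q1 + q2"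
  shows "min bb s + min bb p \<le> min bb q1 + min bb q2"
  using assms by (simp add: min_def)

lemma RR_submod:
  assumes "finite A" "finite B"
  shows "RR X Y c b (A \<union> B) + RR X Y c b (A \<inter> B) \<le> RR X Y c b A + RR X Y c b B"
proof -
  have "\<And>y. min (b y) (\<Sum>x\<in>A \<union> B. c x y) + min (b y) (\<Sum>x\<in>A \<inter> B. c x y)
      \<le> min (b y) (\<Sum>x\<in>A. c x y) + min (b y) (\<Sum>x\<in>B. c x y)"
  proof -
    fix y
    show "?thesis y"
    proof (rule min_concave_nat)
      show "(\<Sum>x\<in>A \<inter> B. c x y) \<le> (\<Sum>x\<in>A. c x y)"
        by (rule sum_mono2) (use assms in auto)
      show "(\<Sum>x\<in>A \<inter> B. c x y) \<le> (\<Sum>x\<in>B. c x y)"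
        by (rule sum_mono2) (use assms in auto)
      show "(\<Sum>x\<in>A. c x y) \<le> (\<Sum>x\<in>A \<union> B. c x y)"
        by (rule sum_mono2) (use assms in auto)
      show "(\<Sum>x\<in>B. c x y) \<le> (\<Sum>x\<in>A \<union> B. c x y)"
        by (rule sum_mono2) (use assms in auto)
      show "(\<Sum>x\<in>A \<inter> B. c x y) + (\<Sum>x\<in>A \<union> B. c x y) = (\<Sum>x\<in>A. c x y) + (\<Sum>x\<in>B. c x y)"
        using sum.union_inter[OF assms, of "\<lambda>x. c x y"] by simp
    qed
  qed
  then show ?thesis unfolding RR_def sum.distrib[symmetric] by (rule sum_mono)
qed

lemma flow_exists:
  fixes X :: "'a set" and Y :: "'b set"
  assumes "finite X" "finite Y"
  shows "\<And>a b c. sum a X = s \<Longrightarrow> (\<forall>J\<subseteq>X. sum a J \<le> RR X Y c b J) \<Longrightarrow>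
    \<exists>h. (\<forall>x y. h x y \<le> c x y) \<and> (\<forall>x\<in>X. (\<Sum>y\<in>Y. h x y) = a x) \<and> (\<forall>y\<in>Y. (\<Sum>x\<in>X. h x y) \<le> b y)"
proof (induction s)
  case 0
  then show ?case by (intro exI[of _ "\<lambda>x y. 0"]) (auto simp: assms)
next
  case (Suc s a b c)
  note cond = Suc.prems(2)
  obtain x0 where x0: "x0 \<in> X" "a x0 > 0"
    using Suc.prems(1) by (metis gr0I sum.neutral nat.distinct(1))
  define T where "T = {J. J \<subseteq> X - {x0} \<and> sum a J = RR X Y c b J}"
  have finT: "finite T"
  proof (rule finite_subset[of _ "Pow X"])
    show "T \<subseteq> Pow X" unfolding T_def by auto
  qed (use assms in simp)
  have "{} \<in> T" unfolding T_def RR_def by simp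
  then have "card ` T \<noteq> {}" by auto
  have "Max (card ` T) \<in> card ` T" using finT \<open>card ` T \<noteq> {}\<close> by (intro Max_in) auto
  then obtain U where U1: "U \<in> T" "card U = Max (card ` T)" by auto
  have U: "U \<in> T" "\<forall>J\<in>T. card J \<le> card U" using U1 finT by auto
  have UX: "U \<subseteq> X - {x0}" and Ut: "sum a U = RR X Y c b U" using U(1) T_def by auto
  have finU: "finite U" using UX assms finite_subset by blast
  have "\<exists>y0\<in>Y. c x0 y0 > 0 \<and> b y0 > 0 \<and> (\<Sum>x\<in>U. c x y0) < b y0"
  proof (rule ccontr)
    assume nc: "\<not> ?thesis"
    have "RR X Y c b (insert x0 U) = RR X Y c b U"
      unfolding RR_def
    proof (rule sum.cong[OF refl])
      fix y assume "y \<in> Y"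
      have "x0 \<notin> U" using UX by auto
      then have "(\<Sum>x\<in>insert x0 U. c x y) = c x0 y + (\<Sum>x\<in>U. c x y)" using finU by simp
      then show "min (b y) (\<Sum>x\<in>insert x0 U. c x y) = min (b y) (\<Sum>x\<in>U. c x y)"
        using nc \<open>y \<in> Y\<close> by (cases "c x0 y > 0") (auto simp: min_def)
    qed
    moreover have "sum a (insert x0 U) = a x0 + sum a U" using UX finU by (subst sum.insert) auto
    moreover have "insert x0 U \<subseteq> X" using UX x0 by auto
    then have "sum a (insert x0 U) \<le> RR X Y c b (insert x0 U)" using cond by blast
    ultimately show False using Ut x0 by linarith
  qed
  then obtain y0 where y0: "y0 \<in> Y" "c x0 y0 > 0" "b y0 > 0" "(\<Sum>x\<in>U. c x y0) < b y0" by blast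
  define a' where "a' = a(x0 := a x0 - 1)"
  define b' where "b' = b(y0 := b y0 - 1)"
  define c' where "c' = c(x0 := (c x0)(y0 := c x0 y0 - 1))"
  have sa': "sum a' X = s"
    using Suc.prems(1) x0 assms unfolding a'_def by (simp add: sum.remove)
  have cond': "\<forall>J\<subseteq>X. sum a' J \<le> RR X Y c' b' J"
  proof (intro allI impI)
    fix J assume JX: "J \<subseteq> X"
    have finJ: "finite J" using JX assms finite_subset by blast
    show "sum a' J \<le> RR X Y c' b' J"
    proof (cases "x0 \<in> J")
      case True
      have sa: "sum a' J + 1 = sum a J"
        using True finJ x0 unfolding a'_def by (simp add: sum.remove)
      have dc: "\<And>y. (\<Sum>x\<in>J. c' x y) = (\<Sum>x\<in>J. c x y) - (if y = y0 then 1 else 0)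
         \<and> (\<Sum>x\<in>J. c x y) \<ge> c x0 y"
      proof -
        fix y
        have e1: "(\<Sum>x\<in>J. c' x y) = c' x0 y + (\<Sum>x\<in>J - {x0}. c x y)"
          using True finJ unfolding c'_def by (simp add: sum.remove)
        have e2: "(\<Sum>x\<in>J. c x y) = c x0 y + (\<Sum>x\<in>J - {x0}. c x y)"
          using True finJ by (simp add: sum.remove)
        show "?thesis y" using e1 e2 y0 unfolding c'_def by auto
      qed
      have "RR X Y c' b' J + 1 = RR X Y c b J"
      proof -
        have r1: "RR X Y c' b' J = min (b' y0) (\<Sum>x\<in>J. c' x y0) + (\<Sum>y\<in>Y - {y0}. min (b' y) (\<Sum>x\<in>J. c' x y))"
          unfolding RR_def using assms(2) y0(1) by (simp add: sum.remove)
        have r2: "RR X Y c b J = min (b y0) (\<Sum>x\<in>J. c x y0) + (\<Sum>y\<in>Y - {y0}. min (b y) (\<Sum>x\<in>J. c x y))"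
          unfolding RR_def using assms(2) y0(1) by (simp add: sum.remove)
        have r3: "(\<Sum>y\<in>Y - {y0}. min (b' y) (\<Sum>x\<in>J. c' x y)) = (\<Sum>y\<in>Y - {y0}. min (b y) (\<Sum>x\<in>J. c x y))"
          by (rule sum.cong) (use dc in \<open>auto simp: b'_def\<close>)
        have "min (b' y0) (\<Sum>x\<in>J. c' x y0) + 1 = min (b y0) (\<Sum>x\<in>J. c x y0)"
          using dc[of y0] y0 unfolding b'_def by (auto simp: min_def)
        then show ?thesis using r1 r2 r3 by simp
      qed
      moreover have "sum a J \<le> RR X Y c b J" using cond JX by blast
      ultimately show ?thesis using sa by linarith
    next
      case False
      have sa: "sum a' J = sum a J"
        using False unfolding a'_def by (intro sum.cong) auto
      have dc: "\<And>y. (\<Sum>x\<in>J. c' x y) = (\<Sum>x\<in>J. c x y)"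
        using False unfolding c'_def by (intro sum.cong) auto
      show ?thesis
      proof (cases "(\<Sum>x\<in>J. c x y0) < b y0")
        case True
        have "RR X Y c' b' J = RR X Y c b J"
          unfolding RR_def dc
        proof (rule sum.cong[OF refl])
          fix y show "min (b' y) (\<Sum>x\<in>J. c x y) = min (b y) (\<Sum>x\<in>J. c x y)"
            using True unfolding b'_def by (auto simp: min_def)
        qed
        moreover have "sum a J \<le> RR X Y c b J" using cond JX by blast
        ultimately show ?thesis using sa by simp
      next
        case notlt: False
        have "RR X Y c' b' J + 1 \<ge> RR X Y c b J"
        proof -
          have r1: "RR X Y c' b' J = min (b' y0) (\<Sum>x\<in>J. c' x y0) + (\<Sum>y\<in>Y - {y0}. min (b' y) (\<Sum>x\<in>J. c' x y))"
            unfolding RR_def using assms(2) y0(1) by (simp add: sum.remove)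
          have r2: "RR X Y c b J = min (b y0) (\<Sum>x\<in>J. c x y0) + (\<Sum>y\<in>Y - {y0}. min (b y) (\<Sum>x\<in>J. c x y))"
            unfolding RR_def using assms(2) y0(1) by (simp add: sum.remove)
          have r3: "(\<Sum>y\<in>Y - {y0}. min (b' y) (\<Sum>x\<in>J. c' x y)) = (\<Sum>y\<in>Y - {y0}. min (b y) (\<Sum>x\<in>J. c x y))"
            by (rule sum.cong) (use dc in \<open>auto simp: b'_def\<close>)
          show ?thesis using r1 r2 r3 dc[of y0] unfolding b'_def by (auto simp: min_def)
        qed
        moreover have "sum a J < RR X Y c b J"
        proof (rule ccontr)
          assume "\<not> sum a J < RR X Y c b J"
          moreover have "sum a J \<le> RR X Y c b J" using cond JX by blast
          ultimately have Jt: "sum a J = RR X Y c b J" by linarith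
          have sub: "RR X Y c b (U \<union> J) + RR X Y c b (U \<inter> J) \<le> RR X Y c b U + RR X Y c b J"
            by (rule RR_submod[OF finU finJ])
          have "sum a (U \<union> J) + sum a (U \<inter> J) = sum a U + sum a J"
            by (rule sum.union_inter[OF finU finJ])
          moreover have "U \<union> J \<subseteq> X" using JX UX by blast
          then have "sum a (U \<union> J) \<le> RR X Y c b (U \<union> J)" using cond by blast
          moreover have "U \<inter> J \<subseteq> X" using JX by blast
          then have "sum a (U \<inter> J) \<le> RR X Y c b (U \<inter> J)" using cond by blast
          ultimately have "sum a (U \<union> J) = RR X Y c b (U \<union> J)" using sub Ut Jt by linarith
          then have "U \<union> J \<in> T" unfolding T_def using UX JX False by auto
          then have "card (U \<union> J) \<le> card U" using U(2) by blast
          then have "U \<union> J = U"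
            using card_seteq[of "U \<union> J" U] finU finJ by auto
          then have "J \<subseteq> U" by blast
          then have "(\<Sum>x\<in>J. c x y0) \<le> (\<Sum>x\<in>U. c x y0)" by (rule sum_mono2[OF finU]) auto
          then show False using notlt y0(4) by linarith
        qed
        ultimately show ?thesis using sa by linarith
      qed
    qed
  qed
  obtain h' where h': "\<forall>x y. h' x y \<le> c' x y" "\<forall>x\<in>X. (\<Sum>y\<in>Y. h' x y) = a' x"
      "\<forall>y\<in>Y. (\<Sum>x\<in>X. h' x y) \<le> b' y"
    using Suc.IH[OF sa' cond'] by blast
  define h where "h = (\<lambda>x y. h' x y + (if x = x0 \<and> y = y0 then 1 else 0))"
  show ?case
  proof (intro exI[of _ h] conjI ballI allI)
    fix x y show "h x y \<le> c x y"
      using h'(1)[rule_format, of x y] y0(2) unfolding h_def c'_def by (auto split: if_splits)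
  next
    fix x assume "x \<in> X"
    have "(\<Sum>y\<in>Y. h x y) = (\<Sum>y\<in>Y. h' x y) + (\<Sum>y\<in>Y. (if x = x0 \<and> y = y0 then 1 else 0))"
      unfolding h_def by (simp add: sum.distrib)
    also have "\<dots> = a x"
      using h'(2) \<open>x \<in> X\<close> x0 y0(1) assms(2) unfolding a'_def by (auto simp: sum.delta)
    finally show "(\<Sum>y\<in>Y. h x y) = a x" .
  next
    fix y assume "y \<in> Y"
    have "(\<Sum>x\<in>X. h x y) = (\<Sum>x\<in>X. h' x y) + (\<Sum>x\<in>X. (if x = x0 \<and> y = y0 then 1 else 0))"
      unfolding h_def by (simp add: sum.distrib)
    also have "\<dots> \<le> b y"
    proof (cases "y = y0")
      case True
      then have "(\<Sum>x\<in>X. h' x y) \<le> b y0 - 1" using h'(3) \<open>y \<in> Y\<close> unfolding b'_def by auto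
      then show ?thesis using True x0 y0(3) assms(1) by (simp add: sum.delta)
    next
      case False
      then show ?thesis using h'(3) \<open>y \<in> Y\<close> unfolding b'_def by auto
    qed
    finally show "(\<Sum>x\<in>X. h x y) \<le> b y" .
  qed
qed



lemma sum_le_eq_nat:
  fixes f g :: "'a \<Rightarrow> nat"
  assumes "finite Y" "\<forall>y\<in>Y. f y \<le> g y" "sum f Y = sum g Y" "y \<in> Y"
  shows "f y = g y"
proof (rule ccontr)
  assume "f y \<noteq> g y"
  then have "f y < g y" using assms by force
  then have "sum f Y < sum g Y" using assms by (intro sum_strict_mono_ex1) auto
  then show False using assms by simp
qed

lemma regular_decomp:
  fixes X :: "'a set" and Y :: "'b set" and m :: nat
  assumes "finite X" "finite Y"
  shows "\<And>c. (\<forall>x\<in>X. (\<Sum>y\<in>Y. c x y) = m) \<Longrightarrow> (\<forall>y\<in>Y. (\<Sum>x\<in>X. c x y) = m) \<Longrightarrow>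
    \<exists>P. (\<forall>i<m. \<forall>x\<in>X. (\<Sum>y\<in>Y. P i x y) = 1) \<and> (\<forall>i<m. \<forall>y\<in>Y. (\<Sum>x\<in>X. P i x y) = 1)
      \<and> (\<forall>x\<in>X. \<forall>y\<in>Y. (\<Sum>i<m. P i x y) = c x y)"
proof (induction m)
  case 0
  show ?case
  proof (intro exI[of _ "\<lambda>i x y. 0"] conjI ballI allI impI)
    fix x y assume "x \<in> X" "y \<in> Y"
    then have "(\<Sum>y\<in>Y. c x y) = 0" using "0.prems" by auto
    then show "(\<Sum>i<0. 0) = c x y" using assms \<open>y \<in> Y\<close> by simp
  qed auto
next
  case (Suc m c)
  have cond: "\<forall>J\<subseteq>X. sum (\<lambda>_. 1::nat) J \<le> RR X Y c (\<lambda>_. 1) J"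
  proof (intro allI impI)
    fix J assume JX: "J \<subseteq> X"
    have finJ: "finite J" using JX assms finite_subset by blast
    have "Suc m * card J = (\<Sum>x\<in>J. \<Sum>y\<in>Y. c x y)" using Suc.prems(1) JX by (simp add: subset_iff)
    also have "\<dots> = (\<Sum>y\<in>Y. \<Sum>x\<in>J. c x y)" by (rule sum.swap)
    also have "\<dots> \<le> (\<Sum>y\<in>Y. Suc m * min 1 (\<Sum>x\<in>J. c x y))"
    proof (rule sum_mono)
      fix y assume "y \<in> Y"
      have "(\<Sum>x\<in>J. c x y) \<le> (\<Sum>x\<in>X. c x y)" using JX assms by (intro sum_mono2) auto
      then have "(\<Sum>x\<in>J. c x y) \<le> Suc m" using Suc.prems(2) \<open>y \<in> Y\<close> by simp
      then show "(\<Sum>x\<in>J. c x y) \<le> Suc m * min 1 (\<Sum>x\<in>J. c x y)"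
        by (cases "(\<Sum>x\<in>J. c x y) = 0") auto
    qed
    also have "\<dots> = Suc m * RR X Y c (\<lambda>_. 1) J" unfolding RR_def by (simp add: sum_distrib_left)
    finally have "Suc m * card J \<le> Suc m * RR X Y c (\<lambda>_. 1) J" .
    then have "card J \<le> RR X Y c (\<lambda>_. 1) J" by (subst (asm) mult_le_cancel1) simp
    then show "sum (\<lambda>_. 1::nat) J \<le> RR X Y c (\<lambda>_. 1) J" by simp
  qed
  obtain h where h: "\<forall>x y. h x y \<le> c x y" "\<forall>x\<in>X. (\<Sum>y\<in>Y. h x y) = 1"
      "\<forall>y\<in>Y. (\<Sum>x\<in>X. h x y) \<le> 1"
    using flow_exists[OF assms refl cond] by auto
  have "Suc m * card X = (\<Sum>x\<in>X. \<Sum>y\<in>Y. c x y)" using Suc.prems(1) by simp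
  also have "\<dots> = (\<Sum>y\<in>Y. \<Sum>x\<in>X. c x y)" by (rule sum.swap)
  also have "\<dots> = Suc m * card Y" using Suc.prems(2) by simp
  finally have "Suc m * card X = Suc m * card Y" .
  then have cXY: "card X = card Y" by (subst (asm) mult_cancel1) simp
  have "(\<Sum>y\<in>Y. \<Sum>x\<in>X. h x y) = (\<Sum>x\<in>X. \<Sum>y\<in>Y. h x y)" by (rule sum.swap)
  also have "\<dots> = card X" using h(2) by simp
  finally have "(\<Sum>y\<in>Y. \<Sum>x\<in>X. h x y) = (\<Sum>y\<in>Y. 1)" using cXY by simp
  then have h3: "\<forall>y\<in>Y. (\<Sum>x\<in>X. h x y) = 1"
    using sum_le_eq_nat[OF assms(2), of "\<lambda>y. \<Sum>x\<in>X. h x y" "\<lambda>_. 1"] h(3) by blast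
  define c' where "c' = (\<lambda>x y. c x y - h x y)"
  have c'1: "\<forall>x\<in>X. (\<Sum>y\<in>Y. c' x y) = m"
  proof
    fix x assume "x \<in> X"
    have "(\<Sum>y\<in>Y. c' x y) + (\<Sum>y\<in>Y. h x y) = (\<Sum>y\<in>Y. c x y)"
      unfolding c'_def sum.distrib[symmetric] using h(1) by (intro sum.cong) (auto simp: le_add_diff_inverse2)
    then show "(\<Sum>y\<in>Y. c' x y) = m" using h(2) Suc.prems(1) \<open>x \<in> X\<close> by simp
  qed
  have c'2: "\<forall>y\<in>Y. (\<Sum>x\<in>X. c' x y) = m"
  proof
    fix y assume "y \<in> Y"
    have "(\<Sum>x\<in>X. c' x y) + (\<Sum>x\<in>X. h x y) = (\<Sum>x\<in>X. c x y)"
      unfolding c'_def sum.distrib[symmetric] using h(1) by (intro sum.cong) (auto simp: le_add_diff_inverse2)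
    then show "(\<Sum>x\<in>X. c' x y) = m" using h3 Suc.prems(2) \<open>y \<in> Y\<close> by simp
  qed
  obtain P where P: "\<forall>i<m. \<forall>x\<in>X. (\<Sum>y\<in>Y. P i x y) = 1" "\<forall>i<m. \<forall>y\<in>Y. (\<Sum>x\<in>X. P i x y) = 1"
      "\<forall>x\<in>X. \<forall>y\<in>Y. (\<Sum>i<m. P i x y) = c' x y"
    using Suc.IH[OF c'1 c'2] by blast
  define P' where "P' = (\<lambda>i. if i = m then h else P i)"
  show ?case
  proof (intro exI[of _ P'] conjI ballI allI impI)
    fix i x assume "i < Suc m" "x \<in> X"
    then show "(\<Sum>y\<in>Y. P' i x y) = 1" using P(1) h(2) unfolding P'_def by (cases "i = m") auto
  next
    fix i y assume "i < Suc m" "y \<in> Y"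
    then show "(\<Sum>x\<in>X. P' i x y) = 1" using P(2) h3 unfolding P'_def by (cases "i = m") auto
  next
    fix x y assume "x \<in> X" "y \<in> Y"
    have "(\<Sum>i<Suc m. P' i x y) = (\<Sum>i<m. P i x y) + h x y" unfolding P'_def by simp
    also have "\<dots> = c x y" using P(3) \<open>x \<in> X\<close> \<open>y \<in> Y\<close> h(1) unfolding c'_def
      by (simp add: le_add_diff_inverse2)
    finally show "(\<Sum>i<Suc m. P' i x y) = c x y" .
  qed
qed


lemma edge_coloring:
  fixes X :: "'a set" and Y :: "'b set" and H :: "'a \<Rightarrow> 'b \<Rightarrow> nat" and m :: nat
  assumes fX: "finite X" and fY: "finite Y" and HX: "\<forall>x\<in>X. (\<Sum>y\<in>Y. H x y) = m"
    and HY: "\<forall>y\<in>Y. (\<Sum>x\<in>X. H x y) \<le> m"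
  shows "\<exists>Q. (\<forall>i<m. \<forall>x\<in>X. (\<Sum>y\<in>Y. Q i x y) = 1) \<and> (\<forall>i<m. \<forall>y\<in>Y. (\<Sum>x\<in>X. Q i x y) \<le> 1)
      \<and> (\<forall>x\<in>X. \<forall>y\<in>Y. (\<Sum>i<m. Q i x y) = H x y)"
proof -
  define X' where "X' = X <+> Y"
  define Y' where "Y' = Y <+> X"
  define c :: "'a + 'b \<Rightarrow> 'b + 'a \<Rightarrow> nat" where
    "c u v = (case u of Inl x \<Rightarrow> (case v of Inl y \<Rightarrow> H x y | Inr _ \<Rightarrow> 0)
       | Inr y \<Rightarrow> (case v of Inl y' \<Rightarrow> if y = y' then m - (\<Sum>x\<in>X. H x y) else 0 | Inr x \<Rightarrow> H x y))" for u v
  have fX': "finite X'" "finite Y'" unfolding X'_def Y'_def using fX fY by auto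
  have c1: "\<forall>u\<in>X'. (\<Sum>v\<in>Y'. c u v) = m"
  proof
    fix u assume "u \<in> X'"
    then consider (l) x where "u = Inl x" "x \<in> X" | (r) y where "u = Inr y" "y \<in> Y"
      unfolding X'_def by auto
    then show "(\<Sum>v\<in>Y'. c u v) = m"
    proof cases
      case l
      then show ?thesis unfolding Y'_def using fX fY HX by (simp add: sum.Plus c_def o_def)
    next
      case r
      have "(\<Sum>v\<in>Y'. c u v) = (\<Sum>y'\<in>Y. if y = y' then m - (\<Sum>x\<in>X. H x y) else 0) + (\<Sum>x\<in>X. H x y)"
        unfolding Y'_def using fX fY r by (simp add: sum.Plus c_def o_def)
      also have "\<dots> = m - (\<Sum>x\<in>X. H x y) + (\<Sum>x\<in>X. H x y)"
        using fY r by (simp add: sum.delta)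
      also have "\<dots> = m" using HY r by simp
      finally show ?thesis .
    qed
  qed
  have c2: "\<forall>v\<in>Y'. (\<Sum>u\<in>X'. c u v) = m"
  proof
    fix v assume "v \<in> Y'"
    then consider (l) y where "v = Inl y" "y \<in> Y" | (r) x where "v = Inr x" "x \<in> X"
      unfolding Y'_def by auto
    then show "(\<Sum>u\<in>X'. c u v) = m"
    proof cases
      case r
      then show ?thesis unfolding X'_def using fX fY HX by (simp add: sum.Plus c_def o_def)
    next
      case l
      have "(\<Sum>u\<in>X'. c u v) = (\<Sum>x\<in>X. H x y) + (\<Sum>y'\<in>Y. if y' = y then m - (\<Sum>x\<in>X. H x y') else 0)"
        unfolding X'_def using fX fY l by (simp add: sum.Plus c_def o_def)
      also have "\<dots> = (\<Sum>x\<in>X. H x y) + (m - (\<Sum>x\<in>X. H x y))"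
        using fY l by (simp add: sum.delta)
      also have "\<dots> = m" using HY l by simp
      finally show ?thesis .
    qed
  qed
  obtain P where P: "\<forall>i<m. \<forall>x\<in>X'. (\<Sum>y\<in>Y'. P i x y) = 1" "\<forall>i<m. \<forall>y\<in>Y'. (\<Sum>x\<in>X'. P i x y) = 1"
      "\<forall>x\<in>X'. \<forall>y\<in>Y'. (\<Sum>i<m. P i x y) = c x y"
    using regular_decomp[OF fX' c1 c2] by blast
  have Pc: "P i u v \<le> c u v" if "i < m" "u \<in> X'" "v \<in> Y'" for i u v
  proof -
    have "P i u v \<le> (\<Sum>i<m. P i u v)" using that by (intro member_le_sum) auto
    then show ?thesis using P(3) that by simp
  qed
  define Q where "Q i x y = P i (Inl x) (Inl y)" for i x y
  show ?thesis
  proof (intro exI[of _ Q] conjI ballI allI impI)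
    fix i x assume ix: "i < m" "x \<in> X"
    have "Inl x \<in> X'" using ix unfolding X'_def by auto
    then have "1 = (\<Sum>v\<in>Y'. P i (Inl x) v)" using P(1) ix by auto
    also have "\<dots> = (\<Sum>y\<in>Y. P i (Inl x) (Inl y)) + (\<Sum>x'\<in>X. P i (Inl x) (Inr x'))"
      unfolding Y'_def using fX fY by (simp add: sum.Plus o_def)
    also have "(\<Sum>x'\<in>X. P i (Inl x) (Inr x')) = 0"
    proof (rule sum.neutral, rule ballI)
      fix x' assume "x' \<in> X"
      then have "Inr x' \<in> Y'" unfolding Y'_def by auto
      then show "P i (Inl x) (Inr x') = 0" using Pc[OF ix(1) \<open>Inl x \<in> X'\<close>] unfolding c_def by fastforce
    qed
    finally show "(\<Sum>y\<in>Y. Q i x y) = 1" unfolding Q_def by simp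
  next
    fix i y assume iy: "i < m" "y \<in> Y"
    have "Inl y \<in> Y'" using iy unfolding Y'_def by auto
    have "(\<Sum>x\<in>X. Q i x y) \<le> (\<Sum>x\<in>X. P i (Inl x) (Inl y)) + (\<Sum>y'\<in>Y. P i (Inr y') (Inl y))"
      unfolding Q_def by simp
    also have "\<dots> = (\<Sum>u\<in>X'. P i u (Inl y))"
      unfolding X'_def using fX fY by (simp add: sum.Plus o_def)
    also have "\<dots> = 1" using P(2) iy \<open>Inl y \<in> Y'\<close> by auto
    finally show "(\<Sum>x\<in>X. Q i x y) \<le> 1" .
  next
    fix x y assume "x \<in> X" "y \<in> Y"
    then have "Inl x \<in> X'" "Inl y \<in> Y'" unfolding X'_def Y'_def by auto
    then show "(\<Sum>i<m. Q i x y) = H x y" using P(3) unfolding Q_def c_def by auto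
  qed
qed


lemma occ_finite: "finite {(i, j). i \<in> A \<and> j \<in> {1..(s::nat)} \<and> S i j = l}" if "finite A"
  by (rule finite_subset[of _ "A \<times> {1..s}"]) (use that in auto)

lemma occ_split:
  assumes "r \<le> n"
  shows "occ n n S l = occ r n S l + card {(i, j). i \<in> {r<..n} \<and> j \<in> {1..n} \<and> S i j = l}"
proof -
  have e: "{(i, j). i \<in> {1..n} \<and> j \<in> {1..n} \<and> S i j = l} =
    {(i, j). i \<in> {1..r} \<and> j \<in> {1..n} \<and> S i j = l} \<union> {(i, j). i \<in> {r<..n} \<and> j \<in> {1..n} \<and> S i j = l}"
    using assms by (auto; linarith)
  have f1: "finite {(i, j). i \<in> {1..r} \<and> j \<in> {1..n} \<and> S i j = l}" by (rule occ_finite) simp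
  have f2: "finite {(i, j). i \<in> {r<..n} \<and> j \<in> {1..n} \<and> S i j = l}" by (rule occ_finite) simp
  have d: "{(i, j). i \<in> {1..r} \<and> j \<in> {1..n} \<and> S i j = l} \<inter> {(i, j). i \<in> {r<..n} \<and> j \<in> {1..n} \<and> S i j = l} = {}"
    by auto
  show ?thesis unfolding occ_def e using card_Un_disjoint[OF f1 f2 d] .
qed

lemma occ_cong:
  assumes "\<forall>i\<in>{1..r}. \<forall>j\<in>{1..n}. S i j = L i j"
  shows "occ r n S l = occ r n L l"
proof -
  have "{(i, j). i \<in> {1..r} \<and> j \<in> {1..n} \<and> S i j = l} = {(i, j). i \<in> {1..r} \<and> j \<in> {1..n} \<and> L i j = l}"
    using assms by auto
  then show ?thesis unfolding occ_def by simp
qed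

lemma new_card_col:
  fixes S :: "nat \<Rightarrow> nat \<Rightarrow> nat" and r n l :: nat
  assumes "\<forall>j\<in>{1..n}. \<forall>i\<in>{1..n}. \<forall>i'\<in>{1..n}. i \<noteq> i' \<longrightarrow> S i j \<noteq> S i' j"
  shows "card {(i, j). i \<in> {r<..n} \<and> j \<in> {1..n} \<and> S i j = l} = card {j\<in>{1..n}. \<exists>i\<in>{r<..n}. S i j = l}"
proof -
  let ?A = "{(i, j). i \<in> {r<..n} \<and> j \<in> {1..n} \<and> S i j = l}"
  have inj: "inj_on snd ?A"
  proof (rule inj_onI)
    fix p q assume p: "p \<in> ?A" and q: "q \<in> ?A" and e: "snd p = snd q"
    obtain i j where pij: "p = (i, j)" by (cases p) auto
    obtain i' j' where qij: "q = (i', j')" by (cases q) auto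
    have h: "i \<in> {1..n}" "i' \<in> {1..n}" "j \<in> {1..n}" "j = j'" "S i j = l" "S i' j' = l"
      using p q e pij qij by auto
    have "i = i'"
    proof (rule ccontr)
      assume "i \<noteq> i'"
      then have "S i j \<noteq> S i' j" using assms h(1,2,3) by simp
      then show False using h by simp
    qed
    then show "p = q" using pij qij h by simp
  qed
  moreover have im: "snd ` ?A = {j\<in>{1..n}. \<exists>i\<in>{r<..n}. S i j = l}"
  proof (rule set_eqI)
    fix j show "j \<in> snd ` ?A \<longleftrightarrow> j \<in> {j\<in>{1..n}. \<exists>i\<in>{r<..n}. S i j = l}"
    proof
      assume "j \<in> snd ` ?A"
      then obtain p where p: "p \<in> ?A" "j = snd p" by blast
      obtain i j' where pij: "p = (i, j')" by (cases p) auto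
      have "i \<in> {r<..n}" "j \<in> {1..n}" "S i j = l" using p pij by auto
      then show "j \<in> {j\<in>{1..n}. \<exists>i\<in>{r<..n}. S i j = l}" by blast
    next
      assume "j \<in> {j\<in>{1..n}. \<exists>i\<in>{r<..n}. S i j = l}"
      then obtain i where "i \<in> {r<..n}" "j \<in> {1..n}" "S i j = l" by blast
      then have "(i, j) \<in> ?A" by simp
      then show "j \<in> snd ` ?A" by (rule image_eqI[rotated]) simp
    qed
  qed
  ultimately show ?thesis using card_image[OF inj] by simp
qed

lemma new_card_row:
  fixes S :: "nat \<Rightarrow> nat \<Rightarrow> nat" and r n l :: nat
  assumes "\<forall>i\<in>{1..n}. \<forall>j\<in>{1..n}. \<forall>j'\<in>{1..n}. j \<noteq> j' \<longrightarrow> S i j \<noteq> S i j'"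
  shows "card {(i, j). i \<in> {r<..n} \<and> j \<in> {1..n} \<and> S i j = l} \<le> n - r"
proof -
  let ?A = "{(i, j). i \<in> {r<..n} \<and> j \<in> {1..n} \<and> S i j = l}"
  have inj: "inj_on fst ?A"
  proof (rule inj_onI)
    fix p q assume p: "p \<in> ?A" and q: "q \<in> ?A" and e: "fst p = fst q"
    obtain i j where pij: "p = (i, j)" by (cases p) auto
    obtain i' j' where qij: "q = (i', j')" by (cases q) auto
    have h: "i \<in> {1..n}" "j \<in> {1..n}" "j' \<in> {1..n}" "i = i'" "S i j = l" "S i' j' = l"
      using p q e pij qij by auto
    have "j = j'"
    proof (rule ccontr)
      assume "j \<noteq> j'"
      then have "S i j \<noteq> S i j'" using assms h(1,2,3) by blast
      then show False using h by simp
    qed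
    then show "p = q" using pij qij h by simp
  qed
  have "fst ` ?A \<subseteq> {r<..n}" by auto
  then have "card (fst ` ?A) \<le> card {r<..n}" by (intro card_mono) auto
  then have "card ?A \<le> card {r<..n}" using card_image[OF inj] by simp
  then show ?thesis by simp
qed

lemma sum_occ:
  assumes "\<forall>i\<in>{1..r}. \<forall>j\<in>{1..n}. L i j \<in> {1..k}"
  shows "(\<Sum>l\<in>{1..k}. occ r n L l) = r * n"
proof -
  have e: "{1..r} \<times> {1..n} = (\<Union>l\<in>{1..k}. {(i, j). i \<in> {1..r} \<and> j \<in> {1..n} \<and> L i j = l})"
    using assms by auto
  have "card (\<Union>l\<in>{1..k}. {(i, j). i \<in> {1..r} \<and> j \<in> {1..n} \<and> L i j = l})
      = (\<Sum>l\<in>{1..k}. card {(i, j). i \<in> {1..r} \<and> j \<in> {1..n} \<and> L i j = l})"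
  proof (rule card_UN_disjoint)
    show "\<forall>l\<in>{1..k}. finite {(i, j). i \<in> {1..r} \<and> j \<in> {1..n} \<and> L i j = l}"
    proof
      fix l show "finite {(i, j). i \<in> {1..r} \<and> j \<in> {1..n} \<and> L i j = l}" by (rule occ_finite) simp
    qed
  qed auto
  then show ?thesis unfolding occ_def e[symmetric] by simp
qed


lemma necessity:
  fixes n k r :: nat and rho :: "nat \<Rightarrow> nat" and L S :: "nat \<Rightarrow> nat \<Rightarrow> nat"
  assumes rect: "rho_latin_rectangle n k rho r n L" and rn: "r \<le> n"
    and sq: "rho_latin_square n k rho S" and agree: "\<forall>i\<in>{1..r}. \<forall>j\<in>{1..n}. S i j = L i j"
  shows "(\<forall>l\<in>{1..k}. rho l - occ r n L l \<le> n - r) \<and>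
    (\<forall>J\<subseteq>{1..n}. card J * (n - r) \<le> (\<Sum>l\<in>{1..k}. min (rho l - occ r n L l) (mu_sym r L J l)))"
proof -
  have S1: "\<forall>i\<in>{1..n}. \<forall>j\<in>{1..n}. S i j \<in> {1..k}"
    and S2: "\<forall>i\<in>{1..n}. \<forall>j\<in>{1..n}. \<forall>j'\<in>{1..n}. j \<noteq> j' \<longrightarrow> S i j \<noteq> S i j'"
    and S3: "\<forall>j\<in>{1..n}. \<forall>i\<in>{1..n}. \<forall>i'\<in>{1..n}. i \<noteq> i' \<longrightarrow> S i j \<noteq> S i' j"
    and S4: "\<forall>l\<in>{1..k}. occ n n S l = rho l"
    using sq unfolding rho_latin_square_def by blast+
  define N where "N l = card {(i, j). i \<in> {r<..n} \<and> j \<in> {1..n} \<and> S i j = l}" for l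
  have occeq: "rho l - occ r n L l = N l" if "l \<in> {1..k}" for l
    using occ_split[OF rn, of S l] occ_cong[OF agree, of l] S4 that unfolding N_def by simp
  have C0: "\<forall>l\<in>{1..k}. rho l - occ r n L l \<le> n - r"
    using occeq new_card_row[OF S2] unfolding N_def by simp
  define H :: "nat \<Rightarrow> nat \<Rightarrow> nat" where "H j l = of_bool (\<exists>i\<in>{r<..n}. S i j = l)" for j l
  have Hrow: "(\<Sum>l\<in>{1..k}. H j l) = n - r" if j: "j \<in> {1..n}" for j
  proof -
    have "{1..k} \<inter> {l. \<exists>i\<in>{r<..n}. S i j = l} = (\<lambda>i. S i j) ` {r<..n}"
      using S1 j by auto
    moreover have "inj_on (\<lambda>i. S i j) {r<..n}"
    proof (rule inj_onI)
      fix i i' assume "i \<in> {r<..n}" "i' \<in> {r<..n}" "S i j = S i' j"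
      then have "i \<in> {1..n}" "i' \<in> {1..n}" by auto
      then show "i = i'" using S3 j \<open>S i j = S i' j\<close> by blast
    qed
    ultimately have "card ({1..k} \<inter> {l. \<exists>i\<in>{r<..n}. S i j = l}) = n - r"
      by (simp add: card_image)
    then show ?thesis unfolding H_def by simp
  qed
  have Hcol: "(\<Sum>j\<in>{1..n}. H j l) = N l" for l
  proof -
    have "(\<Sum>j\<in>{1..n}. H j l) = card {j\<in>{1..n}. \<exists>i\<in>{r<..n}. S i j = l}"
      unfolding H_def by (simp add: Int_def)
    then show ?thesis unfolding N_def using new_card_col[OF S3] by simp
  qed
  have HG: "(\<Sum>j\<in>J. H j l) \<le> mu_sym r L J l" if J: "J \<subseteq> {1..n}" for J l
  proof -
    have fJ: "finite J" using J finite_subset by blast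
    have "(\<Sum>j\<in>J. H j l) = card (J \<inter> {j. \<exists>i\<in>{r<..n}. S i j = l})"
      unfolding H_def using fJ by simp
    also have "\<dots> \<le> card {j\<in>J. \<forall>i\<in>{1..r}. L i j \<noteq> l}"
    proof (rule card_mono)
      show "finite {j\<in>J. \<forall>i\<in>{1..r}. L i j \<noteq> l}" using fJ by simp
      show "J \<inter> {j. \<exists>i\<in>{r<..n}. S i j = l} \<subseteq> {j\<in>J. \<forall>i\<in>{1..r}. L i j \<noteq> l}"
      proof
        fix j assume "j \<in> J \<inter> {j. \<exists>i\<in>{r<..n}. S i j = l}"
        then obtain i where ji: "j \<in> J" "i \<in> {r<..n}" "S i j = l" by blast
        have "L i' j \<noteq> l" if i': "i' \<in> {1..r}" for i'
        proof -
          have "i' \<noteq> i" "i' \<in> {1..n}" "i \<in> {1..n}" "j \<in> {1..n}" using i' ji J rn by auto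
          then have "S i' j \<noteq> S i j" using S3 by simp
          then show ?thesis using agree i' \<open>j \<in> {1..n}\<close> ji by simp
        qed
        then show "j \<in> {j\<in>J. \<forall>i\<in>{1..r}. L i j \<noteq> l}" using ji by blast
      qed
    qed
    finally show ?thesis unfolding mu_sym_def .
  qed
  have P1: "card J * (n - r) \<le> (\<Sum>l\<in>{1..k}. min (rho l - occ r n L l) (mu_sym r L J l))"
    if J: "J \<subseteq> {1..n}" for J
  proof -
    have fJ: "finite J" using J finite_subset by blast
    have "card J * (n - r) = (\<Sum>j\<in>J. \<Sum>l\<in>{1..k}. H j l)" using Hrow J by (simp add: subset_iff)
    also have "\<dots> = (\<Sum>l\<in>{1..k}. \<Sum>j\<in>J. H j l)" by (rule sum.swap)
    also have "\<dots> \<le> (\<Sum>l\<in>{1..k}. min (rho l - occ r n L l) (mu_sym r L J l))"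
    proof (rule sum_mono)
      fix l assume l: "l \<in> {1..k}"
      have "(\<Sum>j\<in>J. H j l) \<le> (\<Sum>j\<in>{1..n}. H j l)" using J by (intro sum_mono2) auto
      then have "(\<Sum>j\<in>J. H j l) \<le> rho l - occ r n L l" using Hcol occeq[OF l] by simp
      then show "(\<Sum>j\<in>J. H j l) \<le> min (rho l - occ r n L l) (mu_sym r L J l)" using HG[OF J] by simp
    qed
    finally show ?thesis .
  qed
  show ?thesis using C0 P1 by blast
qed


lemma sum_eq_1_nat:
  fixes f :: "'a \<Rightarrow> nat"
  assumes "finite Y" "sum f Y = 1"
  shows "\<exists>y\<in>Y. f y = 1"
proof -
  obtain y where y: "y \<in> Y" "f y \<noteq> 0" using assms by (metis sum.neutral zero_neq_one)
  have "f y \<le> sum f Y" using assms y by (intro member_le_sum) auto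
  then have "f y = 1" using y assms by simp
  then show ?thesis using y(1) by blast
qed

lemma ob_le: "(1::nat) \<le> of_bool P \<Longrightarrow> P"
  by (cases P) auto

lemma sum_ge_2_nat:
  fixes f :: "'a \<Rightarrow> nat"
  assumes "finite X" "a \<in> X" "b \<in> X" "a \<noteq> b" "1 \<le> f a" "1 \<le> f b"
  shows "2 \<le> sum f X"
proof -
  have "sum f {a, b} \<le> sum f X" using assms by (intro sum_mono2) auto
  then show ?thesis using assms by simp
qed

lemma sufficiency:
  fixes n k r :: nat and rho :: "nat \<Rightarrow> nat" and L :: "nat \<Rightarrow> nat \<Rightarrow> nat"
  assumes rect: "rho_latin_rectangle n k rho r n L" and rn: "r \<le> n"
    and sumrho: "(\<Sum>l\<in>{1..k}. rho l) = n ^ 2"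
    and C0: "\<forall>l\<in>{1..k}. rho l - occ r n L l \<le> n - r"
    and P1: "\<forall>J\<subseteq>{1..n}. card J * (n - r) \<le> (\<Sum>l\<in>{1..k}. min (rho l - occ r n L l) (mu_sym r L J l))"
  shows "completable n k rho r n L"
proof -
  have L1: "\<forall>i\<in>{1..r}. \<forall>j\<in>{1..n}. L i j \<in> {1..k}"
    and L2: "\<forall>i\<in>{1..r}. \<forall>j\<in>{1..n}. \<forall>j'\<in>{1..n}. j \<noteq> j' \<longrightarrow> L i j \<noteq> L i j'"
    and L3: "\<forall>j\<in>{1..n}. \<forall>i\<in>{1..r}. \<forall>i'\<in>{1..r}. i \<noteq> i' \<longrightarrow> L i j \<noteq> L i' j"
    and L4: "\<forall>l\<in>{1..k}. occ r n L l \<le> rho l"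
    using rect unfolding rho_latin_rectangle_def by blast+
  define m where "m = n - r"
  define d where "d l = rho l - occ r n L l" for l
  have sum_d: "(\<Sum>l\<in>{1..k}. d l) = n * m"
  proof -
    have "(\<Sum>l\<in>{1..k}. d l) = (\<Sum>l\<in>{1..k}. rho l) - (\<Sum>l\<in>{1..k}. occ r n L l)"
      unfolding d_def using L4 by (intro sum_subtractf_nat) auto
    also have "\<dots> = n * n - r * n" using sumrho sum_occ[OF L1] by (simp add: power2_eq_square)
    also have "\<dots> = n * m" unfolding m_def by (simp add: diff_mult_distrib2 mult.commute)
    finally show ?thesis .
  qed
  define G :: "nat \<Rightarrow> nat \<Rightarrow> nat" where "G j l = of_bool (\<forall>i\<in>{1..r}. L i j \<noteq> l)" for j l
  have condA: "\<forall>J\<subseteq>{1..n}. sum (\<lambda>_. m) J \<le> RR {1..n} {1..k} G d J"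
  proof (intro allI impI)
    fix J assume J: "J \<subseteq> {1..n}"
    have fJ: "finite J" using J finite_subset by blast
    have "(\<Sum>j\<in>J. G j l) = mu_sym r L J l" for l
      unfolding G_def mu_sym_def using fJ by (simp add: Int_def)
    then show "sum (\<lambda>_. m) J \<le> RR {1..n} {1..k} G d J"
      unfolding RR_def d_def m_def using P1 J by simp
  qed
  have sA: "sum (\<lambda>_. m) {1..n} = n * m" by simp
  obtain H where H: "\<forall>x y. H x y \<le> G x y" "\<forall>x\<in>{1..n}. (\<Sum>y\<in>{1..k}. H x y) = m"
      "\<forall>y\<in>{1..k}. (\<Sum>x\<in>{1..n}. H x y) \<le> d y"
    using flow_exists[OF _ _ sA condA] by auto
  have G1: "G j l \<le> 1" for j l unfolding G_def by simp
  have H1: "H j l \<le> 1" for j l using H(1)[rule_format, of j l] G1[of j l] by linarith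
  have "(\<Sum>l\<in>{1..k}. \<Sum>j\<in>{1..n}. H j l) = (\<Sum>j\<in>{1..n}. \<Sum>l\<in>{1..k}. H j l)" by (rule sum.swap)
  also have "\<dots> = n * m" using H(2) by simp
  finally have "(\<Sum>l\<in>{1..k}. \<Sum>j\<in>{1..n}. H j l) = (\<Sum>l\<in>{1..k}. d l)" using sum_d by simp
  then have Hcol: "\<forall>l\<in>{1..k}. (\<Sum>j\<in>{1..n}. H j l) = d l"
    using sum_le_eq_nat[of "{1..k}" "\<lambda>l. \<Sum>j\<in>{1..n}. H j l" d] H(3) by auto
  have HY: "\<forall>l\<in>{1..k}. (\<Sum>j\<in>{1..n}. H j l) \<le> m" using Hcol C0 unfolding d_def m_def by simp
  obtain Q where Q: "\<forall>i<m. \<forall>x\<in>{1..n}. (\<Sum>y\<in>{1..k}. Q i x y) = 1"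
      "\<forall>i<m. \<forall>y\<in>{1..k}. (\<Sum>x\<in>{1..n}. Q i x y) \<le> 1"
      "\<forall>x\<in>{1..n}. \<forall>y\<in>{1..k}. (\<Sum>i<m. Q i x y) = H x y"
    using edge_coloring[OF _ _ H(2) HY] by auto
  have QH: "Q c j l \<le> H j l" if "c < m" "j \<in> {1..n}" "l \<in> {1..k}" for c j l
  proof -
    have "Q c j l \<le> (\<Sum>i<m. Q i j l)" using that by (intro member_le_sum) auto
    then show ?thesis using Q(3) that by simp
  qed
  define sym where "sym c j = (SOME l. l \<in> {1..k} \<and> Q c j l = 1)" for c j
  have sym: "sym c j \<in> {1..k} \<and> Q c j (sym c j) = 1" if "c < m" "j \<in> {1..n}" for c j
  proof -
    have "\<exists>l\<in>{1..k}. Q c j l = 1" using Q(1) that by (intro sum_eq_1_nat) auto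
    then show ?thesis unfolding sym_def by (metis (mono_tags, lifting) someI_ex)
  qed
  have sym_uniq: "sym c j = l" if "c < m" "j \<in> {1..n}" "l \<in> {1..k}" "1 \<le> Q c j l" for c j l
  proof (rule ccontr)
    assume ne: "sym c j \<noteq> l"
    have "2 \<le> (\<Sum>y\<in>{1..k}. Q c j y)"
      using sym[OF that(1,2)] that ne by (intro sum_ge_2_nat[of _ "sym c j" l]) auto
    then show False using Q(1) that by simp
  qed
  define S where "S i j = (if i \<le> r then L i j else sym (i - r - 1) j)" for i j
  have Snew: "sym (i - r - 1) j = S i j \<and> i - r - 1 < m" if "i \<in> {1..n}" "\<not> i \<le> r" for i j
    using that unfolding S_def m_def by auto
  have agree: "\<forall>i\<in>{1..r}. \<forall>j\<in>{1..n}. S i j = L i j" unfolding S_def by simp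
  have S1: "\<forall>i\<in>{1..n}. \<forall>j\<in>{1..n}. S i j \<in> {1..k}"
  proof (intro ballI)
    fix i j assume ij: "i \<in> {1..n}" "j \<in> {1..n}"
    show "S i j \<in> {1..k}"
    proof (cases "i \<le> r")
      case True then show ?thesis using L1 ij unfolding S_def by simp
    next
      case False
      have "sym (i - r - 1) j = S i j" "i - r - 1 < m" using Snew[OF ij(1) False] by auto
      then show ?thesis using sym[of "i - r - 1" j] ij(2) by auto
    qed
  qed
  have S2: "\<forall>i\<in>{1..n}. \<forall>j\<in>{1..n}. \<forall>j'\<in>{1..n}. j \<noteq> j' \<longrightarrow> S i j \<noteq> S i j'"
  proof (intro ballI impI)
    fix i j j' assume ij: "i \<in> {1..n}" "j \<in> {1..n}" "j' \<in> {1..n}" "j \<noteq> j'"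
    show "S i j \<noteq> S i j'"
    proof (cases "i \<le> r")
      case True then show ?thesis using L2 ij unfolding S_def by simp
    next
      case False
      define c where "c = i - r - 1"
      have c: "c < m" "sym c j = S i j" "sym c j' = S i j'" using Snew[OF ij(1) False] c_def by auto
      show ?thesis
      proof
        assume eq: "S i j = S i j'"
        have "Q c j (S i j) = 1" "Q c j' (S i j) = 1" "S i j \<in> {1..k}"
          using sym[OF c(1) ij(2)] sym[OF c(1) ij(3)] c eq by auto
        then have "2 \<le> (\<Sum>x\<in>{1..n}. Q c x (S i j))"
          using ij by (intro sum_ge_2_nat[of _ j j']) auto
        moreover have "(\<Sum>x\<in>{1..n}. Q c x (S i j)) \<le> 1" using Q(2) c(1) \<open>S i j \<in> {1..k}\<close> by blast
        ultimately show False by linarith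
      qed
    qed
  qed
  have mixed: "S i j \<noteq> S i' j" if "j \<in> {1..n}" "i \<in> {1..r}" "i' \<in> {1..n}" "\<not> i' \<le> r" for i i' j
  proof
    assume eq: "S i j = S i' j"
    define c where "c = i' - r - 1"
    have c: "c < m" "sym c j = S i' j" using Snew[OF that(3,4)] c_def by auto
    have l: "S i' j \<in> {1..k}" "Q c j (S i' j) = 1" using sym[OF c(1) that(1)] c by auto
    then have "1 \<le> H j (S i' j)" using QH[OF c(1) that(1) l(1)] by simp
    then have "1 \<le> G j (S i' j)" using H(1) le_trans by blast
    then have "\<forall>i\<in>{1..r}. L i j \<noteq> S i' j" unfolding G_def by (rule ob_le)
    then have "L i j \<noteq> S i' j" using that(2) by blast
    then show False using eq agree that by simp
  qed
  have S3: "\<forall>j\<in>{1..n}. \<forall>i\<in>{1..n}. \<forall>i'\<in>{1..n}. i \<noteq> i' \<longrightarrow> S i j \<noteq> S i' j"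
  proof (intro ballI impI)
    fix j i i' assume ij: "j \<in> {1..n}" "i \<in> {1..n}" "i' \<in> {1..n}" "i \<noteq> i'"
    show "S i j \<noteq> S i' j"
    proof (cases "i \<le> r")
      case True
      show ?thesis
      proof (cases "i' \<le> r")
        case True
        then show ?thesis using L3 ij \<open>i \<le> r\<close> unfolding S_def by simp
      next
        case False
        then show ?thesis using mixed[of j i i'] ij True by simp
      qed
    next
      case False
      show ?thesis
      proof (cases "i' \<le> r")
        case True
        then show ?thesis using mixed[of j i' i] ij False by auto
      next
        case F2: False
        define c where "c = i - r - 1"
        define c' where "c' = i' - r - 1"
        have c: "c < m" "sym c j = S i j" "c' < m" "sym c' j = S i' j" "c \<noteq> c'"
          using Snew[OF ij(2) False] Snew[OF ij(3) F2] c_def c'_def ij False F2 by auto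
        show ?thesis
        proof
          assume eq: "S i j = S i' j"
          have l: "S i j \<in> {1..k}" "Q c j (S i j) = 1" "Q c' j (S i j) = 1"
            using sym[OF c(1) ij(1)] sym[OF c(3) ij(1)] c eq by auto
          then have "2 \<le> (\<Sum>x<m. Q x j (S i j))"
            using c by (intro sum_ge_2_nat[of _ c c']) auto
          then have "2 \<le> H j (S i j)" using Q(3) ij(1) l(1) by simp
          then show False using H1[of j "S i j"] by simp
        qed
      qed
    qed
  qed
  have newiff: "(\<exists>i\<in>{r<..n}. S i j = l) \<longleftrightarrow> H j l = 1" if "j \<in> {1..n}" "l \<in> {1..k}" for j l
  proof
    assume "\<exists>i\<in>{r<..n}. S i j = l"
    then obtain i where i: "i \<in> {r<..n}" "S i j = l" by blast
    then have i': "i \<in> {1..n}" "\<not> i \<le> r" by auto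
    define c where "c = i - r - 1"
    have c: "c < m" "sym c j = l" using Snew[OF i'] c_def i by auto
    have "Q c j l = 1" using sym[OF c(1) that(1)] c by auto
    then have "1 \<le> H j l" using QH[OF c(1) that] by simp
    then show "H j l = 1" using H1[of j l] by simp
  next
    assume "H j l = 1"
    then have "(\<Sum>c<m. Q c j l) = 1" using Q(3) that by simp
    then obtain c where c: "c < m" "Q c j l = 1" using sum_eq_1_nat[of "{..<m}"] by auto
    then have s: "sym c j = l" using sym_uniq[OF c(1) that] by simp
    define i where "i = c + r + 1"
    have "i \<in> {r<..n}" "i \<in> {1..n}" "\<not> i \<le> r" "i - r - 1 = c" using c(1) unfolding i_def m_def by auto
    then have "S i j = l" using Snew[of i j] s by simp
    then show "\<exists>i\<in>{r<..n}. S i j = l" using \<open>i \<in> {r<..n}\<close> by blast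
  qed
  have S4: "\<forall>l\<in>{1..k}. occ n n S l = rho l"
  proof
    fix l assume l: "l \<in> {1..k}"
    have e1: "card {(i, j). i \<in> {r<..n} \<and> j \<in> {1..n} \<and> S i j = l} = card {j\<in>{1..n}. \<exists>i\<in>{r<..n}. S i j = l}"
      by (rule new_card_col[OF S3])
    have e2: "{j\<in>{1..n}. \<exists>i\<in>{r<..n}. S i j = l} = {j\<in>{1..n}. H j l = 1}"
      using newiff l by blast
    have e3: "card {j\<in>{1..n}. H j l = 1} = (\<Sum>j\<in>{1..n}. H j l)"
    proof -
      have "(\<Sum>j\<in>{1..n}. H j l) = (\<Sum>j\<in>{1..n}. of_bool (H j l = 1))"
        using H1 by (intro sum.cong) (auto simp: le_Suc_eq)
      then show ?thesis by (simp add: Int_def)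
    qed
    have "card {(i, j). i \<in> {r<..n} \<and> j \<in> {1..n} \<and> S i j = l} = d l"
      using e1 e2 e3 Hcol l by simp
    then have "occ n n S l = occ r n L l + d l"
      using occ_split[OF rn, of S l] occ_cong[OF agree, of l] by simp
    then show "occ n n S l = rho l" using L4 l unfolding d_def by simp
  qed
  have "rho_latin_square n k rho S" unfolding rho_latin_square_def using S1 S2 S3 S4 by blast
  then show ?thesis unfolding completable_def using agree by blast
qed


lemma mu_swap:
  assumes "finite J" "finite K"
  shows "(\<Sum>l\<in>K. mu_sym r L J l) = (\<Sum>j\<in>J. mu_col r L K j)"
proof -
  have "(\<Sum>l\<in>K. mu_sym r L J l) = (\<Sum>l\<in>K. \<Sum>j\<in>J. of_bool (\<forall>i\<in>{1..r}. L i j \<noteq> l))"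
    unfolding mu_sym_def using assms by (simp add: Int_def)
  also have "\<dots> = (\<Sum>j\<in>J. \<Sum>l\<in>K. of_bool (\<forall>i\<in>{1..r}. L i j \<noteq> l))" by (rule sum.swap)
  also have "\<dots> = (\<Sum>j\<in>J. mu_col r L K j)"
    unfolding mu_col_def using assms by (simp add: Int_def)
  finally show ?thesis .
qed

lemma compl_all:
  assumes "\<And>J. J \<subseteq> N \<Longrightarrow> B J \<longleftrightarrow> A (N - J)"
  shows "(\<forall>J\<subseteq>N. A J) \<longleftrightarrow> (\<forall>J\<subseteq>N. B J)"
proof
  assume a: "\<forall>J\<subseteq>N. A J"
  show "\<forall>J\<subseteq>N. B J"
  proof (intro allI impI)
    fix J assume J: "J \<subseteq> N"
    have "A (N - J)" using a by blast
    then show "B J" using assms[OF J] by blast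
  qed
next
  assume b: "\<forall>J\<subseteq>N. B J"
  show "\<forall>J\<subseteq>N. A J"
  proof (intro allI impI)
    fix J assume J: "J \<subseteq> N"
    have "N - (N - J) = J" using J by blast
    have "B (N - J)" using b by blast
    then have "A (N - (N - J))" using assms[of "N - J"] by blast
    then show "A J" using \<open>N - (N - J) = J\<close> by simp
  qed
qed

lemma compl_all2:
  assumes "\<And>J K. J \<subseteq> N \<Longrightarrow> K \<subseteq> M \<Longrightarrow> B J K \<longleftrightarrow> A (N - J) (M - K)"
  shows "(\<forall>J\<subseteq>N. \<forall>K\<subseteq>M. A J K) \<longleftrightarrow> (\<forall>J\<subseteq>N. \<forall>K\<subseteq>M. B J K)"
proof
  assume a: "\<forall>J\<subseteq>N. \<forall>K\<subseteq>M. A J K"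
  show "\<forall>J\<subseteq>N. \<forall>K\<subseteq>M. B J K"
  proof (intro allI impI)
    fix J K assume J: "J \<subseteq> N" and K: "K \<subseteq> M"
    have "A (N - J) (M - K)" using a[rule_format, OF Diff_subset Diff_subset] .
    then show "B J K" using assms[OF J K] by simp
  qed
next
  assume b: "\<forall>J\<subseteq>N. \<forall>K\<subseteq>M. B J K"
  show "\<forall>J\<subseteq>N. \<forall>K\<subseteq>M. A J K"
  proof (intro allI impI)
    fix J K assume J: "J \<subseteq> N" and K: "K \<subseteq> M"
    have "N - (N - J) = J" "M - (M - K) = K" using J K by (simp_all add: double_diff)
    have "B (N - J) (M - K)" using b[rule_format, OF Diff_subset Diff_subset] .
    then have "A (N - (N - J)) (M - (M - K))" using assms[OF Diff_subset Diff_subset] by simp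
    then show "A J K" using \<open>N - (N - J) = J\<close> \<open>M - (M - K) = K\<close> by simp
  qed
qed

lemma arith1:
  fixes A B M :: nat
  assumes "B \<le> A" "M \<le> A"
  shows "(A - M \<le> A - B) \<longleftrightarrow> (B \<le> M)"
  using assms by linarith

lemma arith2:
  fixes A B D T :: nat
  assumes "B \<le> A" "D \<le> A"
  shows "(A - B \<le> A - D + T) \<longleftrightarrow> (D \<le> B + T)"
  using assms by linarith

lemma min_split_sum:
  fixes d mu :: "nat \<Rightarrow> nat"
  assumes "finite Y"
  shows "(\<Sum>y\<in>Y. d y - mu y) + (\<Sum>y\<in>Y. min (d y) (mu y)) = (\<Sum>y\<in>Y. d y)"
  unfolding sum.distrib[symmetric] by (rule sum.cong) auto

lemma min_choice:
  fixes d mu :: "nat \<Rightarrow> nat"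
  assumes "finite Y"
  shows "(\<forall>K\<subseteq>Y. c \<le> (\<Sum>y\<in>K. d y) + (\<Sum>y\<in>Y - K. mu y)) \<longleftrightarrow> c \<le> (\<Sum>y\<in>Y. min (d y) (mu y))"
proof
  assume a: "\<forall>K\<subseteq>Y. c \<le> (\<Sum>y\<in>K. d y) + (\<Sum>y\<in>Y - K. mu y)"
  define K where "K = {y\<in>Y. d y \<le> mu y}"
  have "(\<Sum>y\<in>Y. min (d y) (mu y)) = (\<Sum>y\<in>Y - K. min (d y) (mu y)) + (\<Sum>y\<in>K. min (d y) (mu y))"
    using assms unfolding K_def by (intro sum.subset_diff) auto
  also have "\<dots> = (\<Sum>y\<in>Y - K. mu y) + (\<Sum>y\<in>K. d y)"
    unfolding K_def by (intro arg_cong2[where f="(+)"] sum.cong) auto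
  moreover have "K \<subseteq> Y" unfolding K_def by blast
  then have "c \<le> (\<Sum>y\<in>K. d y) + (\<Sum>y\<in>Y - K. mu y)" using a by blast
  ultimately show "c \<le> (\<Sum>y\<in>Y. min (d y) (mu y))" by linarith
next
  assume a: "c \<le> (\<Sum>y\<in>Y. min (d y) (mu y))"
  show "\<forall>K\<subseteq>Y. c \<le> (\<Sum>y\<in>K. d y) + (\<Sum>y\<in>Y - K. mu y)"
  proof (intro allI impI)
    fix K assume K: "K \<subseteq> Y"
    have "(\<Sum>y\<in>Y. min (d y) (mu y)) = (\<Sum>y\<in>Y - K. min (d y) (mu y)) + (\<Sum>y\<in>K. min (d y) (mu y))"
      using assms K by (intro sum.subset_diff) auto
    also have "\<dots> \<le> (\<Sum>y\<in>Y - K. mu y) + (\<Sum>y\<in>K. d y)"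
      by (intro add_mono sum_mono) auto
    finally show "c \<le> (\<Sum>y\<in>K. d y) + (\<Sum>y\<in>Y - K. mu y)" using a by simp
  qed
qed


theorem theorem3p1:
  fixes n k r :: nat and rho :: "nat \<Rightarrow> nat" and L :: "nat \<Rightarrow> nat \<Rightarrow> nat"
  assumes "0 < n" and "0 < k" and "n \<le> k"
    and "\<forall>l\<in>{1..k}. 1 \<le> rho l \<and> rho l \<le> n"
    and "(\<Sum>l\<in>{1..k}. rho l) = n ^ 2"
    and "rho_latin_rectangle n k rho r n L"
    and "r < n"
  defines "e \<equiv> occ r n L"
  defines "C0 \<equiv> (\<forall>l\<in>{1..k}. rho l - e l \<le> n - r)"
  shows
   "(completable n k rho r n L \<longleftrightarrow> C0 \<and>
      (\<forall>J\<subseteq>{1..n}. card J * (n - r)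
          \<le> (\<Sum>l\<in>{1..k}. min (rho l - e l) (mu_sym r L J l)))) \<and>
    (completable n k rho r n L \<longleftrightarrow> C0 \<and>
      (\<forall>K\<subseteq>{1..k}. (\<Sum>l\<in>K. rho l - e l)
          \<le> (\<Sum>j\<in>{1..n}. min (n - r) (mu_col r L K j)))) \<and>
    (completable n k rho r n L \<longleftrightarrow> C0 \<and>
      (\<forall>J\<subseteq>{1..n}. card J * (n - r)
          \<ge> (\<Sum>l\<in>{1..k}. (rho l - e l) - mu_sym r L ({1..n} - J) l))) \<and>
    (completable n k rho r n L \<longleftrightarrow> C0 \<and>
      (\<forall>K\<subseteq>{1..k}. (\<Sum>l\<in>K. rho l - e l)
          \<ge> (\<Sum>j\<in>{1..n}. (n - r) - mu_col r L ({1..k} - K) j))) \<and>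
    (completable n k rho r n L \<longleftrightarrow> C0 \<and>
      (\<forall>J\<subseteq>{1..n}. \<forall>K\<subseteq>{1..k}. card J * (n - r)
          \<le> (\<Sum>l\<in>K. rho l - e l) + (\<Sum>l\<in>{1..k} - K. mu_sym r L J l))) \<and>
    (completable n k rho r n L \<longleftrightarrow> C0 \<and>
      (\<forall>J\<subseteq>{1..n}. \<forall>K\<subseteq>{1..k}. (\<Sum>l\<in>K. rho l - e l)
          \<le> card J * (n - r) + (\<Sum>j\<in>{1..n} - J. mu_col r L K j)))"
proof -
  have rn: "r \<le> n" using assms(7) by simp
  note rect = assms(6)
  have L1: "\<forall>i\<in>{1..r}. \<forall>j\<in>{1..n}. L i j \<in> {1..k}"
    and L4: "\<forall>l\<in>{1..k}. occ r n L l \<le> rho l"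
    using rect unfolding rho_latin_rectangle_def by blast+
  define m where "m = n - r"
  define d where "d l = rho l - e l" for l
  have sum_d: "(\<Sum>l\<in>{1..k}. d l) = n * m"
  proof -
    have "(\<Sum>l\<in>{1..k}. d l) = (\<Sum>l\<in>{1..k}. rho l) - (\<Sum>l\<in>{1..k}. occ r n L l)"
      unfolding d_def e_def using L4 by (intro sum_subtractf_nat) auto
    also have "\<dots> = n * n - r * n" using assms(5) sum_occ[OF L1] by (simp add: power2_eq_square)
    also have "\<dots> = n * m" unfolding m_def by (simp add: diff_mult_distrib2 mult.commute)
    finally show ?thesis .
  qed
  have main: "completable n k rho r n L \<longleftrightarrow> C0 \<and>
      (\<forall>J\<subseteq>{1..n}. card J * (n - r) \<le> (\<Sum>l\<in>{1..k}. min (rho l - e l) (mu_sym r L J l)))"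
  proof
    assume "completable n k rho r n L"
    then obtain S where "rho_latin_square n k rho S" "\<forall>i\<in>{1..r}. \<forall>j\<in>{1..n}. S i j = L i j"
      unfolding completable_def by blast
    from necessity[OF rect rn this] show "C0 \<and>
      (\<forall>J\<subseteq>{1..n}. card J * (n - r) \<le> (\<Sum>l\<in>{1..k}. min (rho l - e l) (mu_sym r L J l)))"
      unfolding C0_def e_def .
  next
    assume "C0 \<and> (\<forall>J\<subseteq>{1..n}. card J * (n - r) \<le> (\<Sum>l\<in>{1..k}. min (rho l - e l) (mu_sym r L J l)))"
    then show "completable n k rho r n L"
      using sufficiency[OF rect rn assms(5)] unfolding C0_def e_def by blast
  qed
  have eq3: "(\<forall>J\<subseteq>{1..n}. card J * (n - r) \<le> (\<Sum>l\<in>{1..k}. min (rho l - e l) (mu_sym r L J l)))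
     \<longleftrightarrow> (\<forall>J\<subseteq>{1..n}. card J * (n - r) \<ge> (\<Sum>l\<in>{1..k}. (rho l - e l) - mu_sym r L ({1..n} - J) l))"
  proof (rule compl_all)
    fix J assume J: "J \<subseteq> {1..n}"
    define J' where "J' = {1..n} - J"
    have fJ: "finite J" using J finite_subset by blast
    have c0: "card J \<le> n" using card_mono[OF _ J] by simp
    have c1: "card J' = n - card J" unfolding J'_def using card_Diff_subset[OF fJ J] by simp
    have cJ: "card J = n - card J'" "card J' \<le> n" using c0 c1 by simp_all
    define M where "M = (\<Sum>l\<in>{1..k}. min (d l) (mu_sym r L J' l))"
    have sM: "(\<Sum>l\<in>{1..k}. d l - mu_sym r L J' l) = n * m - M" "M \<le> n * m"
      using min_split_sum[of "{1..k}" d "mu_sym r L J'"] sum_d unfolding M_def by simp_all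
    have "card J * m = n * m - card J' * m" using cJ by (simp add: diff_mult_distrib)
    moreover have "card J' * m \<le> n * m" using cJ by simp
    ultimately have "(card J * m \<ge> (\<Sum>l\<in>{1..k}. d l - mu_sym r L J' l)) \<longleftrightarrow> card J' * m \<le> M"
      using sM arith1[of "card J' * m" "n * m" M] by simp
    then show "(card J * (n - r) \<ge> (\<Sum>l\<in>{1..k}. (rho l - e l) - mu_sym r L ({1..n} - J) l))
      \<longleftrightarrow> card ({1..n} - J) * (n - r) \<le> (\<Sum>l\<in>{1..k}. min (rho l - e l) (mu_sym r L ({1..n} - J) l))"
      unfolding J'_def m_def d_def M_def by simp
  qed
  have eq5: "(\<forall>J\<subseteq>{1..n}. card J * (n - r) \<le> (\<Sum>l\<in>{1..k}. min (rho l - e l) (mu_sym r L J l)))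
     \<longleftrightarrow> (\<forall>J\<subseteq>{1..n}. \<forall>K\<subseteq>{1..k}. card J * (n - r)
          \<le> (\<Sum>l\<in>K. rho l - e l) + (\<Sum>l\<in>{1..k} - K. mu_sym r L J l))"
  proof -
    have "(\<forall>K\<subseteq>{1..k}. card J * (n - r) \<le> (\<Sum>l\<in>K. rho l - e l) + (\<Sum>l\<in>{1..k} - K. mu_sym r L J l))
      \<longleftrightarrow> card J * (n - r) \<le> (\<Sum>l\<in>{1..k}. min (rho l - e l) (mu_sym r L J l))" for J
      by (rule min_choice) simp
    then show ?thesis by simp
  qed
  have eq6: "(\<forall>J\<subseteq>{1..n}. \<forall>K\<subseteq>{1..k}. card J * (n - r)
          \<le> (\<Sum>l\<in>K. rho l - e l) + (\<Sum>l\<in>{1..k} - K. mu_sym r L J l))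
     \<longleftrightarrow> (\<forall>J\<subseteq>{1..n}. \<forall>K\<subseteq>{1..k}. (\<Sum>l\<in>K. rho l - e l)
          \<le> card J * (n - r) + (\<Sum>j\<in>{1..n} - J. mu_col r L K j))"
  proof (rule compl_all2)
    fix J K assume J: "J \<subseteq> {1..n}" and K: "K \<subseteq> {1..k}"
    define J' where "J' = {1..n} - J"
    define K' where "K' = {1..k} - K"
    have fJ: "finite J" using J finite_subset by blast
    have c0: "card J \<le> n" using card_mono[OF _ J] by simp
    have c1: "card J' = n - card J" unfolding J'_def using card_Diff_subset[OF fJ J] by simp
    have cJ: "card J' = n - card J" "card J \<le> n" using c0 c1 by simp_all
    have kK: "{1..k} - K' = K" unfolding K'_def using K by (simp add: double_diff)
    define D where "D = (\<Sum>l\<in>K. d l)"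
    have sD: "(\<Sum>l\<in>K'. d l) = n * m - D" "D \<le> n * m"
    proof -
      have "(\<Sum>l\<in>{1..k}. d l) = (\<Sum>l\<in>{1..k} - K. d l) + (\<Sum>l\<in>K. d l)"
        using K by (intro sum.subset_diff) auto
      then show "(\<Sum>l\<in>K'. d l) = n * m - D" "D \<le> n * m" using sum_d unfolding D_def K'_def by simp_all
    qed
    define T where "T = (\<Sum>j\<in>J'. mu_col r L K j)"
    have sT: "(\<Sum>l\<in>K. mu_sym r L J' l) = T"
      unfolding T_def using J K finite_subset by (intro mu_swap) (auto simp: J'_def)
    have "card J' * m = n * m - card J * m" using cJ by (simp add: diff_mult_distrib)
    moreover have "card J * m \<le> n * m" using cJ by simp
    ultimately have "(card J' * m \<le> (\<Sum>l\<in>K'. d l) + (\<Sum>l\<in>{1..k} - K'. mu_sym r L J' l))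
       \<longleftrightarrow> D \<le> card J * m + T"
      using sD sT kK arith2[of "card J * m" "n * m" D T] by simp
    then show "(\<Sum>l\<in>K. rho l - e l) \<le> card J * (n - r) + (\<Sum>j\<in>{1..n} - J. mu_col r L K j)
      \<longleftrightarrow> card ({1..n} - J) * (n - r) \<le> (\<Sum>l\<in>{1..k} - K. rho l - e l) +
          (\<Sum>l\<in>{1..k} - ({1..k} - K). mu_sym r L ({1..n} - J) l)"
      unfolding J'_def K'_def m_def d_def D_def T_def by simp
  qed
  have eq2: "(\<forall>K\<subseteq>{1..k}. (\<Sum>l\<in>K. rho l - e l) \<le> (\<Sum>j\<in>{1..n}. min (n - r) (mu_col r L K j)))
     \<longleftrightarrow> (\<forall>J\<subseteq>{1..n}. \<forall>K\<subseteq>{1..k}. (\<Sum>l\<in>K. rho l - e l)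
          \<le> card J * (n - r) + (\<Sum>j\<in>{1..n} - J. mu_col r L K j))"
  proof -
    have "(\<forall>J\<subseteq>{1..n}. (\<Sum>l\<in>K. rho l - e l) \<le> (\<Sum>j\<in>J. n - r) + (\<Sum>j\<in>{1..n} - J. mu_col r L K j))
      \<longleftrightarrow> (\<Sum>l\<in>K. rho l - e l) \<le> (\<Sum>j\<in>{1..n}. min (n - r) (mu_col r L K j))" for K
      by (rule min_choice) simp
    then show ?thesis by auto
  qed
  have eq4: "(\<forall>K\<subseteq>{1..k}. (\<Sum>l\<in>K. rho l - e l) \<le> (\<Sum>j\<in>{1..n}. min (n - r) (mu_col r L K j)))
     \<longleftrightarrow> (\<forall>K\<subseteq>{1..k}. (\<Sum>l\<in>K. rho l - e l) \<ge> (\<Sum>j\<in>{1..n}. (n - r) - mu_col r L ({1..k} - K) j))"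
  proof (rule compl_all)
    fix K assume K: "K \<subseteq> {1..k}"
    define K' where "K' = {1..k} - K"
    define D where "D = (\<Sum>l\<in>K'. d l)"
    have sD: "(\<Sum>l\<in>K. d l) = n * m - D" "D \<le> n * m"
    proof -
      have "(\<Sum>l\<in>{1..k}. d l) = (\<Sum>l\<in>{1..k} - K. d l) + (\<Sum>l\<in>K. d l)"
        using K by (intro sum.subset_diff) auto
      then show "(\<Sum>l\<in>K. d l) = n * m - D" "D \<le> n * m" using sum_d unfolding D_def K'_def by simp_all
    qed
    define M where "M = (\<Sum>j\<in>{1..n}. min m (mu_col r L K' j))"
    have sM: "(\<Sum>j\<in>{1..n}. m - mu_col r L K' j) = n * m - M" "M \<le> n * m"
      using min_split_sum[of "{1..n}" "\<lambda>_. m" "mu_col r L K'"] unfolding M_def by simp_all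
    have "((\<Sum>l\<in>K. d l) \<ge> (\<Sum>j\<in>{1..n}. m - mu_col r L K' j)) \<longleftrightarrow> D \<le> M"
      using sD sM arith1[of D "n * m" M] by simp
    then show "((\<Sum>l\<in>K. rho l - e l) \<ge> (\<Sum>j\<in>{1..n}. (n - r) - mu_col r L ({1..k} - K) j))
      \<longleftrightarrow> (\<Sum>l\<in>{1..k} - K. rho l - e l) \<le> (\<Sum>j\<in>{1..n}. min (n - r) (mu_col r L ({1..k} - K) j))"
      unfolding K'_def m_def d_def D_def M_def by simp
  qed
  show ?thesis using main eq2 eq3 eq4 eq5 eq6 by simp
qed


end
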